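(* Let $k(x)$ be a polynomial with $k(x)=k(-x)=\overline{k(x)}$ for real $x$ (i.e. an even polynomial with real coefficients). For $\xi>0$ let $S_\xi$ be the operator on $L^2(0,\xi)$ given by $(S_\xi f)(x)=f(x)+\int_0^\xi f(t)k(x-t)\,dt$, and for those $\xi>0$ at which $S_\xi$ is invertible put $h_2(\xi)=(S_\xi^{-1}1)(\xi)$, where $S_\xi^{-1}1$ (a polynomial in $x$) is evaluated at $x=\xi$; equivalently $h_2(\xi)=1+\int_0^\xi\Gamma_\xi(\xi,t)\,dt$, where $\Gamma_\xi$ is the resolvent kernel, $S_\xi^{-1}f=f+\int_0^\xi\Gamma_\xi(x,t)f(t)\,dt$. Then there is a rational function $R$ with $h_2(\xi)=R(\xi)$ for all such $\xi$. Consequently the function $Q(\xi)=\frac{1}{2h_2(\xi)^2}$ is rational. *)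

theory Defs
  imports "HOL-Analysis.Analysis" "HOL-Computational_Algebra.Polynomial"
begin

definition L2on :: "real \<Rightarrow> (real \<Rightarrow> complex) \<Rightarrow> bool" where
  "L2on \<xi> f \<longleftrightarrow> f \<in> borel_measurable (lebesgue_on {0..\<xi>}) \<and>
     integrable (lebesgue_on {0..\<xi>}) (\<lambda>x. (norm (f x))^2)"

definition Sop :: "complex poly \<Rightarrow> real \<Rightarrow> (real \<Rightarrow> complex) \<Rightarrow> real \<Rightarrow> complex" where
  "Sop k \<xi> f x = f x + (LINT t|lebesgue_on {0..\<xi>}. f t * poly k (of_real (x - t)))"

text \<open>S_xi is invertible as an operator on L^2(0,xi): bijective on a.e.-classes
  (a bounded inverse is then automatic by the open mapping theorem).\<close>
definition S_invertible :: "complex poly \<Rightarrow> real \<Rightarrow> bool" where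
  "S_invertible k \<xi> \<longleftrightarrow>
     (\<forall>g. L2on \<xi> g \<longrightarrow> (\<exists>f. L2on \<xi> f \<and> (AE x in lebesgue_on {0..\<xi>}. Sop k \<xi> f x = g x))) \<and>
     (\<forall>f1 f2. L2on \<xi> f1 \<and> L2on \<xi> f2 \<and>
        (AE x in lebesgue_on {0..\<xi>}. Sop k \<xi> f1 x = Sop k \<xi> f2 x) \<longrightarrow>
        (AE x in lebesgue_on {0..\<xi>}. f1 x = f2 x))"

definition h2 :: "complex poly \<Rightarrow> real \<Rightarrow> complex" where
  "h2 k \<xi> = (THE c. \<exists>p :: complex poly.
      (AE x in lebesgue_on {0..\<xi>}. Sop k \<xi> (\<lambda>t. poly p (of_real t)) x = 1) \<and>
      c = poly p (of_real \<xi>))"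

end

theory Submission
  imports Defs "Jordan_Normal_Form.Determinant"
begin

lemma det_eval: "det (map_mat (\<lambda>p. poly p a) A) = poly (det A) (a::complex)"
proof -
  have "comm_ring_hom (\<lambda>p. poly p a)" by unfold_locales auto
  then show ?thesis by (rule comm_ring_hom.hom_det)
qed

definition gpol :: "complex poly \<Rightarrow> nat \<Rightarrow> complex poly" where
  "gpol k i = (\<Sum>j<Suc (degree k). monom (coeff k j * of_nat (j choose i) * (-1)^(j-i)) (j-i))"

lemma kexp:
  fixes k :: "complex poly"
  shows "poly k (x - t) = (\<Sum>i<Suc (degree k). x^i * poly (gpol k i) t)"
proof -
  let ?N = "Suc (degree k)"
  have "poly k (x - t) = (\<Sum>j<?N. coeff k j * (x + (-t))^j)"
    by (simp add: poly_altdef lessThan_Suc_atMost)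
  also have "\<dots> = (\<Sum>j<?N. coeff k j * (\<Sum>i\<le>j. of_nat (j choose i) * x^i * (-t)^(j-i)))"
    by (rule sum.cong[OF refl]) (use binomial_ring[of x "-t"] in simp)
  also have "\<dots> = (\<Sum>j<?N. coeff k j * (\<Sum>i<?N. of_nat (j choose i) * x^i * (-t)^(j-i)))"
  proof (rule sum.cong[OF refl])
    fix j assume j: "j \<in> {..<?N}"
    have "(\<Sum>i\<le>j. of_nat (j choose i) * x^i * (-t)^(j-i)) = (\<Sum>i<?N. of_nat (j choose i) * x^i * (-t)^(j-i))"
      by (rule sum.mono_neutral_left) (use j in auto)
    then show "coeff k j * (\<Sum>i\<le>j. of_nat (j choose i) * x^i * (-t)^(j-i)) = coeff k j * (\<Sum>i<?N. of_nat (j choose i) * x^i * (-t)^(j-i))"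
      by simp
  qed
  also have "\<dots> = (\<Sum>i<?N. \<Sum>j<?N. x^i * (coeff k j * of_nat (j choose i) * (-1)^(j-i) * t^(j-i)))"
  proof -
    have "(\<Sum>j<?N. coeff k j * (\<Sum>i<?N. of_nat (j choose i) * x^i * (-t)^(j-i))) =
       (\<Sum>j<?N. \<Sum>i<?N. x^i * (coeff k j * of_nat (j choose i) * (-1)^(j-i) * t^(j-i)))"
      unfolding sum_distrib_left
      by (intro sum.cong refl) (simp only: power_minus[of t] mult.assoc mult.left_commute)
    also have "\<dots> = (\<Sum>i<?N. \<Sum>j<?N. x^i * (coeff k j * of_nat (j choose i) * (-1)^(j-i) * t^(j-i)))"
      by (rule sum.swap)
    finally show ?thesis .
  qed
  also have "\<dots> = (\<Sum>i<?N. x^i * poly (gpol k i) t)"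
    by (simp only: gpol_def poly_sum poly_monom sum_distrib_left mult.assoc)
  finally show ?thesis .
qed

definition antider :: "complex poly \<Rightarrow> complex poly" where
  "antider r = (\<Sum>m\<le>degree r. monom (coeff r m / of_nat (Suc m)) (Suc m))"

lemma pderiv_antider: "pderiv (antider r) = r"
proof -
  have "pderiv (antider r) = (\<Sum>m\<le>degree r. pderiv (monom (coeff r m / of_nat (Suc m)) (Suc m)))"
    unfolding antider_def using higher_pderiv_sum[of 1] by simp
  also have "\<dots> = (\<Sum>m\<le>degree r. monom (coeff r m) m)"
    by (simp add: pderiv_monom del: of_nat_Suc)
  finally show ?thesis by (simp add: poly_as_sum_of_monoms)
qed

lemma antider_0: "poly (antider r) 0 = 0"
  by (simp add: antider_def poly_sum poly_monom)

lemma int_poly: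
  fixes r :: "complex poly" and \<xi> :: real
  assumes "\<xi> \<ge> 0"
  shows "integrable (lebesgue_on {0..\<xi>}) (\<lambda>t. poly r (of_real t))"
    and "(LINT t|lebesgue_on {0..\<xi>}. poly r (of_real t)) = poly (antider r) (of_real \<xi>)"
proof -
  have c: "continuous_on {0..\<xi>} (\<lambda>t. poly r (of_real t))"
    by (intro continuous_intros)
  show i: "integrable (lebesgue_on {0..\<xi>}) (\<lambda>t. poly r (of_real t))"
    by (rule continuous_imp_integrable_real[OF c])
  have "((\<lambda>t. poly r (of_real t)) has_integral (poly (antider r) (of_real \<xi>) - poly (antider r) (of_real 0))) {0..\<xi>}"
  proof (rule fundamental_theorem_of_calculus[OF assms])
    fix x assume "x \<in> {0..\<xi>}"
    show "((\<lambda>t. poly (antider r) (of_real t)) has_vector_derivative poly r (of_real x)) (at x within {0..\<xi>})"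
      using has_vector_derivative_real_field[OF poly_DERIV[of "antider r" "of_real x"]]
      by (simp add: pderiv_antider)
  qed
  then have "((\<lambda>t. poly r (of_real t)) has_integral (poly (antider r) (of_real \<xi>))) {0..\<xi>}"
    using antider_0 by simp
  then show "(LINT t|lebesgue_on {0..\<xi>}. poly r (of_real t)) = poly (antider r) (of_real \<xi>)"
    using lebesgue_integral_eq_integral[OF i] by (simp add: integral_unique)
qed

definition pv :: "nat \<Rightarrow> (nat \<Rightarrow> complex) \<Rightarrow> complex poly" where
  "pv N a = (\<Sum>m<N. monom (a m) m)"

definition Gp :: "complex poly \<Rightarrow> nat \<Rightarrow> nat \<Rightarrow> complex poly" where
  "Gp k i m = antider (monom 1 m * gpol k i)"

lemma poly_pv: "poly (pv N a) z = (\<Sum>m<N. a m * z^m)"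
  by (simp add: pv_def poly_sum poly_monom)

lemma coeff_pv: "m < N \<Longrightarrow> coeff (pv N a) m = a m"
  by (simp add: pv_def coeff_sum coeff_monom)

lemma Sop_pv:
  fixes k :: "complex poly"
  assumes "\<xi> \<ge> 0"
  shows "Sop k \<xi> (\<lambda>t. poly (pv (Suc (degree k)) a) (of_real t)) x =
    (\<Sum>i<Suc (degree k). (of_real x)^i * (a i + (\<Sum>m<Suc (degree k). poly (Gp k i m) (of_real \<xi>) * a m)))"
proof -
  let ?N = "Suc (degree k)"
  let ?X = "complex_of_real x"
  have eq: "poly (pv ?N a) (of_real t) * poly k (of_real (x - t)) =
      (\<Sum>i<?N. \<Sum>m<?N. (?X^i * a m) * poly (monom 1 m * gpol k i) (of_real t))" for t
  proof -
    have "poly (pv ?N a) (of_real t) * poly k (of_real (x - t)) =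
       (\<Sum>m<?N. \<Sum>i<?N. (a m * (of_real t)^m) * (?X^i * poly (gpol k i) (of_real t)))"
      unfolding poly_pv of_real_diff kexp sum_product ..
    also have "\<dots> = (\<Sum>i<?N. \<Sum>m<?N. (a m * (of_real t)^m) * (?X^i * poly (gpol k i) (of_real t)))"
      by (rule sum.swap)
    finally show ?thesis by (simp add: poly_monom mult_ac del: sum.lessThan_Suc)
  qed
  have "(LINT t|lebesgue_on {0..\<xi>}. poly (pv ?N a) (of_real t) * poly k (of_real (x - t))) =
      (LINT t|lebesgue_on {0..\<xi>}. (\<Sum>i<?N. \<Sum>m<?N. (?X^i * a m) * poly (monom 1 m * gpol k i) (of_real t)))"
    by (simp only: eq)
  also have "\<dots> = (\<Sum>i<?N. \<Sum>m<?N. (?X^i * a m) * (LINT t|lebesgue_on {0..\<xi>}. poly (monom 1 m * gpol k i) (of_real t)))"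
  proof -
    have int: "integrable (lebesgue_on {0..\<xi>}) (\<lambda>t. (?X^i * a m) * poly (monom 1 m * gpol k i) (of_real t))" for i m
      by (intro integrable_mult_right int_poly(1)[OF assms])
    have int2: "integrable (lebesgue_on {0..\<xi>}) (\<lambda>t. \<Sum>m<?N. (?X^i * a m) * poly (monom 1 m * gpol k i) (of_real t))" for i
      by (rule Bochner_Integration.integrable_sum) (rule int)
    show ?thesis
      by (simp add: Bochner_Integration.integral_sum int int2 del: sum.lessThan_Suc poly_mult)
  qed
  also have "\<dots> = (\<Sum>i<?N. \<Sum>m<?N. (?X^i * a m) * poly (Gp k i m) (of_real \<xi>))"
    by (simp only: int_poly(2)[OF assms] Gp_def)
  finally have I: "(LINT t|lebesgue_on {0..\<xi>}. poly (pv ?N a) (of_real t) * poly k (of_real (x - t))) =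
      (\<Sum>i<?N. \<Sum>m<?N. (?X^i * a m) * poly (Gp k i m) (of_real \<xi>))" .
  show ?thesis
    unfolding Sop_def I
    by (simp add: poly_pv distrib_left sum.distrib sum_distrib_left mult_ac)
qed

lemma L2_poly:
  assumes "\<xi> \<ge> 0"
  shows "L2on \<xi> (\<lambda>t. poly p (of_real t))"
proof -
  have c: "continuous_on {0..\<xi>} (\<lambda>t. poly p (complex_of_real t))"
    by (intro continuous_intros)
  have c2: "continuous_on {0..\<xi>} (\<lambda>t. (norm (poly p (complex_of_real t)))^2)"
    by (intro continuous_intros)
  have S: "{0..\<xi>} \<in> sets lebesgue"
    by simp
  show ?thesis unfolding L2on_def
    using continuous_imp_measurable_on_sets_lebesgue[OF c S] continuous_imp_integrable_real[OF c2]
    by auto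
qed

lemma AE_poly_zero:
  fixes p :: "complex poly"
  assumes xi: "\<xi> > 0" and ae: "AE x in lebesgue_on {0..\<xi>}. poly p (of_real x) = 0"
  shows "p = 0"
proof (rule ccontr)
  assume p: "p \<noteq> 0"
  let ?F = "{x::real. poly p (of_real x) = 0}"
  have "finite {z. poly p z = 0}" using poly_roots_finite[OF p] .
  then have fin: "finite ?F"
  proof -
    have "finite (complex_of_real -` {z. poly p z = 0})"
      by (rule finite_vimageI[OF \<open>finite {z. poly p z = 0}\<close>]) (simp add: inj_on_def)
    then show ?thesis by (simp add: vimage_def)
  qed
  then have "?F \<in> null_sets lborel" by (rule finite_imp_null_set_lborel)
  then have "?F \<in> null_sets lebesgue" by (rule null_sets_completionI)
  then have "?F \<inter> {0..\<xi>} \<in> null_sets lebesgue" by (rule null_set_Int2) simp_all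
  then have "?F \<inter> {0..\<xi>} \<in> null_sets (lebesgue_on {0..\<xi>})"
  proof -
    have S: "{0..\<xi>} \<in> sets lebesgue" by simp
    show ?thesis using \<open>?F \<inter> {0..\<xi>} \<in> null_sets lebesgue\<close>
      by (subst null_sets_restrict_space[OF S]) auto
  qed
  then have "AE x in lebesgue_on {0..\<xi>}. x \<notin> ?F \<inter> {0..\<xi>}" by (rule AE_not_in)
  moreover have "AE x in lebesgue_on {0..\<xi>}. x \<in> {0..\<xi>}" by (rule AE_I2) simp
  ultimately have "AE x in lebesgue_on {0..\<xi>}. False" using ae
    by eventually_elim auto
  then obtain N where N: "{x\<in>space (lebesgue_on {0..\<xi>}). \<not> False} \<subseteq> N"
      "emeasure (lebesgue_on {0..\<xi>}) N = 0" "N \<in> sets (lebesgue_on {0..\<xi>})"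
    by (rule AE_E)
  then have "emeasure (lebesgue_on {0..\<xi>}) {0..\<xi>} = 0"
  proof -
    have "{0..\<xi>} \<subseteq> N" using N(1) by auto
    then have "emeasure (lebesgue_on {0..\<xi>}) {0..\<xi>} \<le> emeasure (lebesgue_on {0..\<xi>}) N"
      using N(3) by (intro emeasure_mono) auto
    then show ?thesis using N(2) by simp
  qed
  moreover have "emeasure (lebesgue_on {0..\<xi>}) {0..\<xi>} = ennreal \<xi>"
    using xi by (simp add: emeasure_restrict_space)
  ultimately show False using xi by simp
qed

lemma Sop_zero: "Sop k \<xi> (\<lambda>t. poly 0 (of_real t)) x = 0"
  by (simp add: Sop_def)

lemma inj_poly:
  assumes xi: "\<xi> > 0" and inv: "S_invertible k \<xi>"
    and eq: "AE x in lebesgue_on {0..\<xi>}. Sop k \<xi> (\<lambda>t. poly p (of_real t)) x = Sop k \<xi> (\<lambda>t. poly q (of_real t)) x"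
  shows "p = q"
proof -
  have "AE x in lebesgue_on {0..\<xi>}. poly p (of_real x) = poly q (of_real x)"
    using inv xi eq L2_poly[of \<xi> p] L2_poly[of \<xi> q] unfolding S_invertible_def by auto
  then have "AE x in lebesgue_on {0..\<xi>}. poly (p - q) (of_real x) = 0"
    by eventually_elim simp
  from AE_poly_zero[OF xi this] show ?thesis by simp
qed

lemma poly_if01: "poly (if b then 1 else 0) z = (if b then 1 else 0)"
  by simp

lemma part1:
  fixes k :: "complex poly"
  shows "\<exists>P Q :: complex poly. \<forall>\<xi>::real. \<xi> > 0 \<and> S_invertible k \<xi> \<longrightarrow>
            poly Q (of_real \<xi>) \<noteq> 0 \<and> h2 k \<xi> = poly P (of_real \<xi>) / poly Q (of_real \<xi>)"
proof -
  define N where "N = Suc (degree k)"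
  define A :: "complex poly mat" where "A = mat N N (\<lambda>(i,m). (if i = m then 1 else 0) + Gp k i m)"
  define Adj where "Adj = adj_mat A"
  define P where "P = (\<Sum>m<N. Adj $$ (m,0) * monom 1 m)"
  have A: "A \<in> carrier_mat N N" by (simp add: A_def)
  have N0: "0 < N" by (simp add: N_def)
  have AAdj: "A * Adj = det A \<cdot>\<^sub>m 1\<^sub>m N" using adj_mat(2)[OF A] by (simp add: Adj_def)
  have Adj: "Adj \<in> carrier_mat N N" using adj_mat(1)[OF A] by (simp add: Adj_def)
  have entry: "(\<Sum>m<N. ((if i = m then 1 else 0) + Gp k i m) * Adj $$ (m,0)) = det A * (if i = 0 then 1 else 0)"
    if i: "i < N" for i
  proof -
    have "(A * Adj) $$ (i,0) = (\<Sum>m<N. ((if i = m then 1 else 0) + Gp k i m) * Adj $$ (m,0))"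
      using A Adj i N0 by (simp add: scalar_prod_def A_def lessThan_atLeast0)
    moreover have "(A * Adj) $$ (i,0) = det A * (if i = 0 then 1 else 0)"
      using AAdj i N0 by simp
    ultimately show ?thesis by simp
  qed
  show ?thesis
  proof (intro exI allI impI conjI)
    fix \<xi> :: real
    assume H: "0 < \<xi> \<and> S_invertible k \<xi>"
    then have xi: "\<xi> > 0" and inv: "S_invertible k \<xi>" by auto
    let ?e = "\<lambda>q. poly q (complex_of_real \<xi>)"
    have SopN: "Sop k \<xi> (\<lambda>t. poly (pv N a) (of_real t)) x =
      (\<Sum>i<N. (of_real x)^i * (a i + (\<Sum>m<N. ?e (Gp k i m) * a m)))" for a x
      unfolding N_def using Sop_pv[of \<xi> k a x] xi by simp
    show D: "?e (det A) \<noteq> 0"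
    proof
      assume "?e (det A) = 0"
      then have "det (map_mat ?e A) = 0" by (simp add: det_eval)
      moreover have "map_mat ?e A \<in> carrier_mat N N" using A by simp
      ultimately obtain v where v: "v \<in> carrier_vec N" "v \<noteq> 0\<^sub>v N" "map_mat ?e A *\<^sub>v v = 0\<^sub>v N"
        using det_0_iff_vec_prod_zero_field by blast
      define a where "a = (\<lambda>m. v $ m)"
      have z: "a i + (\<Sum>m<N. ?e (Gp k i m) * a m) = 0" if i: "i < N" for i
      proof -
        have "(map_mat ?e A *\<^sub>v v) $ i = 0" using v(3) i by simp
        moreover have "(map_mat ?e A *\<^sub>v v) $ i = (\<Sum>m<N. (?e ((if i = m then 1 else 0) + Gp k i m)) * a m)"
          using A v(1) i by (simp add: scalar_prod_def A_def lessThan_atLeast0 a_def)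
        moreover have "(\<Sum>m<N. (?e ((if i = m then 1 else 0) + Gp k i m)) * a m) = a i + (\<Sum>m<N. ?e (Gp k i m) * a m)"
        proof -
          have "(\<Sum>m<N. (?e ((if i = m then 1 else 0) + Gp k i m)) * a m) = (\<Sum>m<N. (if i = m then a m else 0) + ?e (Gp k i m) * a m)"
            by (rule sum.cong) (auto simp: distrib_right)
          also have "\<dots> = a i + (\<Sum>m<N. ?e (Gp k i m) * a m)"
            using i by (simp add: sum.distrib)
          finally show ?thesis .
        qed
        ultimately show ?thesis by simp
      qed
      have "Sop k \<xi> (\<lambda>t. poly (pv N a) (of_real t)) x = Sop k \<xi> (\<lambda>t. poly 0 (of_real t)) x" for x
        unfolding SopN Sop_zero using z by simp
      then have "pv N a = 0" by (intro inj_poly[OF xi inv]) simp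
      then have "a m = 0" if "m < N" for m using coeff_pv[OF that, of a] by simp
      then have "v = 0\<^sub>v N" using v(1) by (intro eq_vecI) (auto simp: a_def)
      with v(2) show False by simp
    qed
    define a where "a = (\<lambda>m. ?e (Adj $$ (m,0)) / ?e (det A))"
    have one: "a i + (\<Sum>m<N. ?e (Gp k i m) * a m) = (if i = 0 then 1 else 0)" if i: "i < N" for i
    proof -
      have "?e (\<Sum>m<N. ((if i = m then 1 else 0) + Gp k i m) * Adj $$ (m,0)) = ?e (det A) * (if i = 0 then 1 else 0)"
        using entry[OF i] by simp
      then have "(\<Sum>m<N. ((if i = m then 1 else 0) + ?e (Gp k i m)) * ?e (Adj $$ (m,0))) = ?e (det A) * (if i = 0 then 1 else 0)"
        by (simp add: poly_sum poly_if01 del: if_distrib)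
      then have "(\<Sum>m<N. ((if i = m then 1 else 0) + ?e (Gp k i m)) * ?e (Adj $$ (m,0))) / ?e (det A) = (if i = 0 then 1 else 0)"
        using D by simp
      moreover have "(\<Sum>m<N. ((if i = m then 1 else 0) + ?e (Gp k i m)) * ?e (Adj $$ (m,0))) / ?e (det A) = a i + (\<Sum>m<N. ?e (Gp k i m) * a m)"
      proof -
        have "(\<Sum>m<N. ((if i = m then 1 else 0) + ?e (Gp k i m)) * ?e (Adj $$ (m,0))) / ?e (det A)
            = (\<Sum>m<N. (if i = m then a m else 0) + ?e (Gp k i m) * a m)"
          unfolding sum_divide_distrib by (rule sum.cong) (auto simp: a_def distrib_right add_divide_distrib)
        also have "\<dots> = a i + (\<Sum>m<N. ?e (Gp k i m) * a m)"
          using i by (simp add: sum.distrib)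
        finally show ?thesis .
      qed
      ultimately show ?thesis by simp
    qed
    have S1: "Sop k \<xi> (\<lambda>t. poly (pv N a) (of_real t)) x = 1" for x
    proof -
      have "Sop k \<xi> (\<lambda>t. poly (pv N a) (of_real t)) x = (\<Sum>i<N. (of_real x)^i * (if i = 0 then 1 else 0))"
        unfolding SopN by (rule sum.cong) (auto simp: one)
      also have "\<dots> = 1" using N0 by (simp add: if_distrib cong: if_cong)
      finally show ?thesis .
    qed
    have "h2 k \<xi> = poly (pv N a) (of_real \<xi>)"
      unfolding h2_def
    proof (rule the_equality)
      show "\<exists>p. (AE x in lebesgue_on {0..\<xi>}. Sop k \<xi> (\<lambda>t. poly p (of_real t)) x = 1) \<and> poly (pv N a) (of_real \<xi>) = poly p (of_real \<xi>)"
        using S1 by auto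
    next
      fix c assume "\<exists>p. (AE x in lebesgue_on {0..\<xi>}. Sop k \<xi> (\<lambda>t. poly p (of_real t)) x = 1) \<and> c = poly p (of_real \<xi>)"
      then obtain p where p: "AE x in lebesgue_on {0..\<xi>}. Sop k \<xi> (\<lambda>t. poly p (of_real t)) x = 1" and c: "c = poly p (of_real \<xi>)"
        by blast
      from p have "AE x in lebesgue_on {0..\<xi>}. Sop k \<xi> (\<lambda>t. poly p (of_real t)) x = Sop k \<xi> (\<lambda>t. poly (pv N a) (of_real t)) x"
        by eventually_elim (simp add: S1)
      then have "p = pv N a" by (rule inj_poly[OF xi inv])
      then show "c = poly (pv N a) (of_real \<xi>)" using c by simp
    qed
    also have "\<dots> = poly P (of_real \<xi>) / ?e (det A)"
      by (simp add: poly_pv P_def poly_sum poly_monom a_def sum_divide_distrib)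
    finally show "h2 k \<xi> = poly P (of_real \<xi>) / ?e (det A)" .
  qed
qed

theorem theorem8p1:
  fixes k :: "complex poly"
  assumes even: "\<forall>x::real. poly k (of_real (- x)) = poly k (of_real x)"
    and real_valued: "\<forall>x::real. cnj (poly k (of_real x)) = poly k (of_real x)"
  shows "(\<exists>P Q :: complex poly. \<forall>\<xi>::real. \<xi> > 0 \<and> S_invertible k \<xi> \<longrightarrow>
            poly Q (of_real \<xi>) \<noteq> 0 \<and> h2 k \<xi> = poly P (of_real \<xi>) / poly Q (of_real \<xi>))
       \<and> (\<exists>P Q :: complex poly. \<forall>\<xi>::real. \<xi> > 0 \<and> S_invertible k \<xi> \<and> h2 k \<xi> \<noteq> 0 \<longrightarrow>
            poly Q (of_real \<xi>) \<noteq> 0 \<and>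
            1 / (2 * (h2 k \<xi>)^2) = poly P (of_real \<xi>) / poly Q (of_real \<xi>))"
proof -
  obtain P Q :: "complex poly" where PQ: "\<forall>\<xi>::real. \<xi> > 0 \<and> S_invertible k \<xi> \<longrightarrow>
            poly Q (of_real \<xi>) \<noteq> 0 \<and> h2 k \<xi> = poly P (of_real \<xi>) / poly Q (of_real \<xi>)"
    using part1[of k] by blast
  have "\<forall>\<xi>::real. \<xi> > 0 \<and> S_invertible k \<xi> \<and> h2 k \<xi> \<noteq> 0 \<longrightarrow>
            poly ([:2:] * (P * P)) (of_real \<xi>) \<noteq> 0 \<and>
            1 / (2 * (h2 k \<xi>)^2) = poly (Q * Q) (of_real \<xi>) / poly ([:2:] * (P * P)) (of_real \<xi>)"
  proof (intro allI impI)
    fix \<xi> :: real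
    assume H: "\<xi> > 0 \<and> S_invertible k \<xi> \<and> h2 k \<xi> \<noteq> 0"
    then have q: "poly Q (of_real \<xi>) \<noteq> 0" and h: "h2 k \<xi> = poly P (of_real \<xi>) / poly Q (of_real \<xi>)"
      using PQ by auto
    have p: "poly P (of_real \<xi>) \<noteq> 0" using H h by auto
    show "poly ([:2:] * (P * P)) (of_real \<xi>) \<noteq> 0 \<and>
            1 / (2 * (h2 k \<xi>)^2) = poly (Q * Q) (of_real \<xi>) / poly ([:2:] * (P * P)) (of_real \<xi>)"
      using p q unfolding h by (simp add: field_simps power2_eq_square)
  qed
  then show ?thesis using PQ by blast
qed

end
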